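(* Let $A\in\mathbb{R}^{n\times n}$ be symmetric, let $\mathcal{D}$ be a distribution over matrices $S\in\mathbb{R}^{n\times\tau}$, and let $X_0 = AWA$ for some $W\in\mathbb{R}^{n\times n}$. Define iterates $$X_{k+1} = X_k + AS_k(S_k^\top A^2 S_k)^\dagger S_k^\top (A - A X_k A) S_k (S_k^\top A^2 S_k)^\dagger S_k^\top A,\qquad k\ge0,$$ with $S_0,S_1,\dots$ drawn independently from $\mathcal{D}$. For $S\sim\mathcal{D}$ let $Z\eqdef AS(S^\top A^2S)^\dagger S^\top A$, and let $$\rho \eqdef 1-\inf\Big\{\langle \mathbb{E}[ZRZ],R\rangle \;:\; R = AQA,\ Q\in\mathbb{R}^{n\times n},\ \|R\|^2=1\Big\}.$$ Then $\mathbb{E}\big[\|X_k - A^\dagger\|^2\big]\le \rho^k\,\|X_0-A^\dagger\|^2$.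
   Context: $A^\dagger$ is the Moore–Penrose pseudoinverse; $\langle X,Y\rangle=\mathrm{Tr}(X^\top Y)$ and $\|\cdot\|$ is the Frobenius norm. *)

theory Defs
  imports "HOL-Analysis.Analysis" "HOL-Probability.Probability"
begin

text \<open>Moore--Penrose pseudoinverse, defined by the four Penrose conditions
  (it exists and is unique for every real matrix).\<close>
definition pinv :: "real^'m^'n \<Rightarrow> real^'n^'m" where
  "pinv M = (THE B. M ** B ** M = M \<and> B ** M ** B = B \<and>
                    transpose (M ** B) = M ** B \<and> transpose (B ** M) = B ** M)"

definition Zmat :: "real^'n^'n \<Rightarrow> real^'t^'n \<Rightarrow> real^'n^'n" where
  "Zmat A S = A ** S ** pinv (transpose S ** A ** A ** S) ** transpose S ** A"

definition step :: "real^'n^'n \<Rightarrow> real^'t^'n \<Rightarrow> real^'n^'n \<Rightarrow> real^'n^'n" where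
  "step A S X = X + A ** S ** pinv (transpose S ** A ** A ** S) ** transpose S
      ** (A - A ** X ** A) ** S ** pinv (transpose S ** A ** A ** S) ** transpose S ** A"

fun iter :: "real^'n^'n \<Rightarrow> real^'n^'n \<Rightarrow> (nat \<Rightarrow> real^'t^'n) \<Rightarrow> nat \<Rightarrow> real^'n^'n" where
  "iter A X0 Ss 0 = X0"
| "iter A X0 Ss (Suc k) = step A (Ss k) (iter A X0 Ss k)"

end

theory Submission
  imports Defs
begin

lemma mm_ldiff: "(A::real^'n^'m) ** (B - C) = A ** B - A ** C"
  by (vector matrix_matrix_mult_def sum_subtractf right_diff_distrib)
lemma mm_rdiff: "((B::real^'n^'m) - C) ** A = B ** A - C ** A"
  by (vector matrix_matrix_mult_def sum_subtractf left_diff_distrib)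
lemma mm_radd: "((B::real^'n^'m) + C) ** A = B ** A + C ** A"
  by (vector matrix_matrix_mult_def sum.distrib distrib_right)

lemma linear_lmul: "linear (\<lambda>X. (P::real^'n^'m) ** (X::real^'p^'n))"
  by (rule linearI) (simp_all add: matrix_add_ldistrib matrix_scalar_ac scalar_matrix_assoc[symmetric])
lemma linear_rmul: "linear (\<lambda>X. (X::real^'n^'m) ** (Q::real^'p^'n))"
  by (rule linearI) (simp_all add: mm_radd scalar_matrix_assoc)

lemma transpose_diff: "transpose ((A::real^'n^'m) - B) = transpose A - transpose B"
  by (vector transpose_def)

lemma inner_mat: "(X::real^'n^'m) \<bullet> Y = (\<Sum>i\<in>UNIV. \<Sum>j\<in>UNIV. X$i$j * Y$i$j)"
  by (simp add: inner_vec_def)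

lemma inner_mm_left: "((X::real^'n^'m) ** Y) \<bullet> W = Y \<bullet> (transpose X ** W)"
proof -
  have "((X::real^'n^'m) ** Y) \<bullet> W = (\<Sum>i\<in>UNIV. \<Sum>k\<in>UNIV. \<Sum>j\<in>UNIV. X$i$j * Y$j$k * W$i$k)"
    by (simp add: inner_mat matrix_matrix_mult_def sum_distrib_left sum_distrib_right)
  also have "\<dots> = (\<Sum>i\<in>UNIV. \<Sum>j\<in>UNIV. \<Sum>k\<in>UNIV. X$i$j * Y$j$k * W$i$k)"
    by (rule sum.cong[OF refl], rule sum.swap)
  also have "\<dots> = (\<Sum>j\<in>UNIV. \<Sum>i\<in>UNIV. \<Sum>k\<in>UNIV. X$i$j * Y$j$k * W$i$k)"
    by (rule sum.swap)
  also have "\<dots> = (\<Sum>j\<in>UNIV. \<Sum>k\<in>UNIV. \<Sum>i\<in>UNIV. X$i$j * Y$j$k * W$i$k)"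
    by (rule sum.cong[OF refl], rule sum.swap)
  also have "\<dots> = Y \<bullet> (transpose X ** W)"
    by (simp add: inner_mat matrix_matrix_mult_def transpose_def sum_distrib_left sum_distrib_right mult_ac)
  finally show ?thesis .
qed

lemma inner_mm_right: "((Y::real^'n^'m) ** X) \<bullet> W = Y \<bullet> (W ** transpose X)"
proof -
  have "((Y::real^'n^'m) ** X) \<bullet> W = (\<Sum>i\<in>UNIV. \<Sum>j\<in>UNIV. \<Sum>k\<in>UNIV. Y$i$k * X$k$j * W$i$j)"
    by (simp add: inner_mat matrix_matrix_mult_def sum_distrib_left sum_distrib_right)
  also have "\<dots> = (\<Sum>i\<in>UNIV. \<Sum>k\<in>UNIV. \<Sum>j\<in>UNIV. Y$i$k * X$k$j * W$i$j)"
    by (rule sum.cong[OF refl], rule sum.swap)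
  also have "\<dots> = Y \<bullet> (W ** transpose X)"
    by (simp add: inner_mat matrix_matrix_mult_def transpose_def sum_distrib_left sum_distrib_right mult_ac)
  finally show ?thesis .
qed

definition penrose :: "real^'m^'n \<Rightarrow> real^'n^'m \<Rightarrow> bool" where
  "penrose M B \<longleftrightarrow> M ** B ** M = M \<and> B ** M ** B = B \<and>
     transpose (M ** B) = M ** B \<and> transpose (B ** M) = B ** M"

lemma penrose_unique:
  assumes 1: "penrose M B1" and 2: "penrose M B2" shows "B1 = B2"
proof -
  from 1 have a1: "M ** B1 ** M = M" "B1 ** M ** B1 = B1" "transpose (M ** B1) = M ** B1"
     "transpose (B1 ** M) = B1 ** M" by (auto simp: penrose_def)
  from 2 have a2: "M ** B2 ** M = M" "B2 ** M ** B2 = B2" "transpose (M ** B2) = M ** B2"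
     "transpose (B2 ** M) = B2 ** M" by (auto simp: penrose_def)
  have "B1 = B1 ** (M ** B1)" using a1 by (simp add: matrix_mul_assoc)
  also have "\<dots> = B1 ** transpose (M ** B1)" using a1 by simp
  also have "\<dots> = B1 ** transpose B1 ** transpose M" by (simp add: matrix_transpose_mul matrix_mul_assoc)
  also have "transpose M = transpose (M ** B2 ** M)" using a2 by simp
  also have "B1 ** transpose B1 ** \<dots> = B1 ** transpose (M ** B1) ** transpose (M ** B2)"
    by (simp add: matrix_transpose_mul matrix_mul_assoc)
  also have "\<dots> = B1 ** M ** B1 ** M ** B2" using a1 a2 by (simp add: matrix_mul_assoc)
  also have "\<dots> = B1 ** M ** B2" using a1 by (simp add: matrix_mul_assoc)
  finally have e1: "B1 = B1 ** M ** B2" .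
  have "B2 = (B2 ** M) ** B2" using a2 by (simp add: matrix_mul_assoc)
  also have "\<dots> = transpose (B2 ** M) ** B2" using a2 by simp
  also have "\<dots> = transpose M ** transpose B2 ** B2" by (simp add: matrix_transpose_mul)
  also have "transpose M = transpose (M ** B1 ** M)" using a1 by simp
  also have "\<dots> ** transpose B2 ** B2 = transpose (B1 ** M) ** transpose (B2 ** M) ** B2"
    by (simp add: matrix_transpose_mul matrix_mul_assoc)
  also have "\<dots> = B1 ** M ** B2 ** M ** B2" using a1 a2 by (simp add: matrix_mul_assoc)
  also have "\<dots> = B1 ** M ** (B2 ** M ** B2)" by (simp only: matrix_mul_assoc)
  also have "\<dots> = B1 ** M ** B2" using a2 by simp
  finally have e2: "B2 = B1 ** M ** B2" .
  show ?thesis using e1 e2 by simp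
qed

lemma pinv_penrose: assumes "\<exists>B. penrose M B" shows "penrose M (pinv M)"
proof -
  obtain B where B: "penrose M B" using assms by blast
  have "pinv M = B" unfolding pinv_def
  proof (rule the_equality)
    show "M ** B ** M = M \<and> B ** M ** B = B \<and> transpose (M ** B) = M ** B \<and> transpose (B ** M) = B ** M"
      using B by (simp add: penrose_def)
  next
    fix x assume "M ** x ** M = M \<and> x ** M ** x = x \<and> transpose (M ** x) = M ** x \<and> transpose (x ** M) = x ** M"
    then have "penrose M x" by (simp add: penrose_def)
    then show "x = B" using B by (rule penrose_unique)
  qed
  then show ?thesis using B by simp
qed

lemma transpose_eq_from_inner:
  fixes P :: "real^'n^'n"
  assumes "\<And>x y. (P *v x) \<bullet> y = x \<bullet> (P *v y)" shows "transpose P = P"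
proof -
  have "transpose P *v x = P *v x" for x
  proof -
    have "\<And>y. (transpose P *v x - P *v x) \<bullet> y = 0"
      by (simp add: inner_diff_left assms dot_lmul_matrix)
    then show ?thesis by (metis inner_eq_zero_iff right_minus_eq)
  qed
  then show ?thesis by (simp add: matrix_eq)
qed

lemma sym_penrose_exists:
  fixes M :: "real^'n^'n" assumes sym: "transpose M = M" shows "\<exists>B. penrose M B"
proof -
  let ?V = "range (\<lambda>y. M *v y)"
  have subV: "subspace ?V"
    by (rule linear_subspace_image) (auto)
  obtain Bs where Bs: "Bs \<subseteq> ?V" "pairwise orthogonal Bs" "\<And>x. x\<in>Bs \<Longrightarrow> norm x = 1"
    "independent Bs" "span Bs = ?V"
    by (rule orthonormal_basis_subspace[OF subV]) blast
  have finBs: "finite Bs" using Bs(4) by (rule independent_imp_finite)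
  define P :: "real^'n^'n" where "P = (\<chi> i j. \<Sum>u\<in>Bs. u$i * u$j)"
  have Pv: "P *v x = (\<Sum>u\<in>Bs. (u \<bullet> x) *\<^sub>R u)" for x
    by (simp add: P_def vec_eq_iff matrix_vector_mult_def inner_vec_def sum_distrib_left
        sum_distrib_right sum_component mult_ac) (intro allI sum.swap)
  have PV: "P *v x \<in> span Bs" for x
    unfolding Pv by (intro span_sum span_mul span_base)
  have orth1: "u \<bullet> (x - P *v x) = 0" if u: "u \<in> Bs" for u x
  proof -
    have "u \<bullet> (P *v x) = (\<Sum>v\<in>Bs. (v \<bullet> x) * (u \<bullet> v))"
      by (simp add: Pv inner_sum_right)
    also have "\<dots> = (u \<bullet> x) * (u \<bullet> u) + (\<Sum>v\<in>Bs-{u}. (v \<bullet> x) * (u \<bullet> v))"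
      using finBs u by (simp add: sum.remove)
    also have "(\<Sum>v\<in>Bs-{u}. (v \<bullet> x) * (u \<bullet> v)) = 0"
      using Bs(2) u by (intro sum.neutral) (auto simp: pairwise_def orthogonal_def)
    also have "u \<bullet> u = 1" using Bs(3)[OF u] by (simp add: norm_eq_1)
    finally show ?thesis by (simp add: inner_diff_right)
  qed
  have orth: "w \<bullet> (x - P *v x) = 0" if w: "w \<in> span Bs" for w x
  proof -
    have "orthogonal (x - P *v x) w"
      using w by (rule orthogonal_to_span) (use orth1 in \<open>auto simp: orthogonal_def inner_commute\<close>)
    then show ?thesis by (simp add: orthogonal_def inner_commute)
  qed
  have fix1: "P *v y = y" if y: "y \<in> span Bs" for y
  proof -
    have "y - P *v y \<in> span Bs" using y PV by (intro span_diff)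
    then have "(y - P *v y) \<bullet> (y - P *v y) = 0" by (rule orth)
    then show ?thesis by simp
  qed
  have MV: "M *v y \<in> span Bs" for y using Bs(5) by auto
  have Psym: "transpose P = P"
    by (simp add: P_def transpose_def vec_eq_iff mult.commute)
  have PP: "P ** P = P"
    by (simp add: matrix_eq matrix_vector_mul_assoc[symmetric] fix1 PV)
  have PM: "P ** M = M"
    by (simp add: matrix_eq matrix_vector_mul_assoc[symmetric] fix1 MV)
  have MP: "M ** P = M"
    by (metis PM Psym sym matrix_transpose_mul)
  define N where "N = M + mat 1 - P"
  have PN: "P ** N = M"
    by (simp add: N_def mm_ldiff matrix_add_ldistrib PM PP)
  have NP: "N ** P = M"
    by (simp add: N_def mm_rdiff mm_radd MP PP)
  have ker: "x = 0" if Nx: "N *v x = 0" for x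
  proof -
    have Mx: "M *v x = 0"
      by (metis PN Nx matrix_vector_mul_assoc matrix_vector_mult_0_right)
    have "N *v x = M *v x + x - P *v x"
      by (simp add: N_def matrix_vector_mult_diff_rdistrib matrix_vector_mult_add_rdistrib)
    then have "x = P *v x" using Nx Mx by simp
    then have "x \<in> span Bs" using PV by metis
    then obtain y where y: "x = M *v y" using Bs(5) by auto
    have "x \<bullet> x = (y v* M) \<bullet> x"
      using y sym by (metis vector_transpose_matrix)
    also have "\<dots> = 0" by (simp add: dot_lmul_matrix Mx)
    finally show ?thesis by simp
  qed
  obtain K where KN: "K ** N = mat 1"
    using matrix_left_invertible_ker[of N] ker by blast
  have NK: "N ** K = mat 1" using KN matrix_left_right_inverse by blast
  have KM: "K ** M = P"
    by (metis NP KN matrix_mul_assoc matrix_mul_lid)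
  have MK: "M ** K = P"
    by (metis PN NK matrix_mul_assoc matrix_mul_rid)
  have PK: "P ** K = K ** P"
  proof -
    have "P ** K = K ** N ** P ** K" by (simp add: KN)
    also have "\<dots> = K ** (N ** P) ** K" by (simp add: matrix_mul_assoc)
    also have "\<dots> = K ** (P ** N) ** K" by (simp add: NP PN)
    also have "\<dots> = K ** P ** (N ** K)" by (simp add: matrix_mul_assoc)
    finally show ?thesis by (simp add: NK)
  qed
  define B where "B = K ** P"
  have "M ** B = P" by (simp add: B_def matrix_mul_assoc MK PP)
  moreover have "B ** M = P" by (simp add: B_def matrix_mul_assoc[symmetric] PM KM)
  moreover have "P ** B = B"
  proof -
    have "P ** B = K ** P ** P" by (simp add: B_def matrix_mul_assoc PK)
    also have "\<dots> = B" by (simp add: B_def matrix_mul_assoc[symmetric] PP)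
    finally show ?thesis .
  qed
  ultimately have "penrose M B"
    unfolding penrose_def using PM PP Psym
    by (metis matrix_mul_assoc)
  then show ?thesis by blast
qed

lemma pinv_sym:
  fixes M :: "real^'n^'n" assumes sym: "transpose M = M"
  shows "penrose M (pinv M)" "transpose (pinv M) = pinv M"
proof -
  show P: "penrose M (pinv M)" using pinv_penrose sym_penrose_exists[OF sym] by blast
  let ?B = "pinv M"
  have a: "M ** ?B ** M = M" "?B ** M ** ?B = ?B" "transpose (M ** ?B) = M ** ?B"
     "transpose (?B ** M) = ?B ** M" using P by (auto simp: penrose_def)
  have "penrose M (transpose ?B)"
    unfolding penrose_def
  proof (intro conjI)
    show "M ** transpose ?B ** M = M"
      by (metis a(1) sym matrix_transpose_mul matrix_mul_assoc)
    show "transpose ?B ** M ** transpose ?B = transpose ?B"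
      by (metis a(2) sym matrix_transpose_mul matrix_mul_assoc)
    show "transpose (M ** transpose ?B) = M ** transpose ?B"
      by (metis a(4) sym matrix_transpose_mul transpose_transpose)
    show "transpose (transpose ?B ** M) = transpose ?B ** M"
      by (metis a(3) sym matrix_transpose_mul transpose_transpose)
  qed
  then show "transpose (pinv M) = pinv M" using P penrose_unique by blast
qed

lemma Z_props:
  fixes A :: "real^'n^'n" and S :: "real^'t^'n"
  assumes symA: "transpose A = A"
  shows "transpose (Zmat A S) = Zmat A S" "Zmat A S ** Zmat A S = Zmat A S"
proof -
  define Bm where "Bm = A ** S"
  have tB: "transpose Bm = transpose S ** A" by (simp add: Bm_def matrix_transpose_mul symA)
  define G where "G = transpose Bm ** Bm"
  have G: "transpose S ** A ** A ** S = G" unfolding G_def tB by (simp add: Bm_def matrix_mul_assoc)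
  have Gs: "transpose G = G" by (simp add: G_def matrix_transpose_mul)
  note pG = pinv_sym[OF Gs]
  have Z: "Zmat A S = Bm ** pinv G ** transpose Bm"
    unfolding tB by (simp add: Zmat_def G Bm_def matrix_mul_assoc)
  show "transpose (Zmat A S) = Zmat A S"
    by (simp add: Z matrix_transpose_mul pG(2) matrix_mul_assoc)
  have "pinv G ** G ** pinv G = pinv G" using pG(1) by (simp add: penrose_def)
  then have e: "pinv G ** transpose Bm ** Bm ** pinv G = pinv G" by (simp add: G_def matrix_mul_assoc)
  have "Zmat A S ** Zmat A S = Bm ** (pinv G ** transpose Bm ** Bm ** pinv G) ** transpose Bm"
    unfolding Z by (simp only: matrix_mul_assoc)
  then show "Zmat A S ** Zmat A S = Zmat A S" using e Z by simp
qed

lemma ZRZ_inner: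
  fixes Z R :: "real^'n^'n"
  assumes "transpose Z = Z" "Z ** Z = Z"
  shows "(Z ** R ** Z) \<bullet> R = (Z ** R ** Z) \<bullet> (Z ** R ** Z)"
proof -
  have "(Z ** R ** Z) \<bullet> (Z ** R ** Z) = (Z ** R) \<bullet> (Z ** R ** Z ** Z)"
    by (simp add: inner_mm_right assms(1))
  also have "\<dots> = (Z ** R) \<bullet> (Z ** R ** Z)" by (simp add: matrix_mul_assoc[symmetric] assms(2))
  also have "\<dots> = R \<bullet> (Z ** (Z ** R ** Z))" by (simp add: inner_mm_left assms(1))
  also have "\<dots> = R \<bullet> (Z ** R ** Z)" by (simp add: matrix_mul_assoc assms(2))
  finally show ?thesis by (simp add: inner_commute)
qed

lemma ZRZ_norm:
  fixes Z R :: "real^'n^'n"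
  assumes "transpose Z = Z" "Z ** Z = Z"
  shows "(norm (R - Z ** R ** Z))\<^sup>2 = (norm R)\<^sup>2 - (Z ** R ** Z) \<bullet> R"
    and "0 \<le> (Z ** R ** Z) \<bullet> R"
  using ZRZ_inner[OF assms, of R]
  by (simp_all add: power2_norm_eq_inner inner_diff inner_commute)

lemma pinv_in_V:
  fixes A :: "real^'n^'n" assumes symA: "transpose A = A"
  shows "pinv A = A ** (transpose (pinv A) ** pinv A ** transpose (pinv A)) ** A"
proof -
  let ?B = "pinv A"
  have a: "A ** ?B ** A = A" "?B ** A ** ?B = ?B" "transpose (A ** ?B) = A ** ?B"
     "transpose (?B ** A) = ?B ** A" using pinv_sym(1)[OF symA] by (auto simp: penrose_def)
  have t1: "A ** transpose ?B = ?B ** A" using a(4) by (simp add: matrix_transpose_mul symA)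
  have t2: "transpose ?B ** A = A ** ?B" using a(3) by (simp add: matrix_transpose_mul symA)
  have "A ** (transpose ?B ** ?B ** transpose ?B) ** A = (A ** transpose ?B) ** ?B ** (transpose ?B ** A)"
    by (simp add: matrix_mul_assoc)
  also have "\<dots> = ?B ** A ** ?B ** A ** ?B" by (simp add: t1 t2 matrix_mul_assoc)
  also have "\<dots> = ?B" using a(2) by (simp add: matrix_mul_assoc[symmetric])
  finally show ?thesis by simp
qed

lemma AApA: "transpose A = A \<Longrightarrow> A ** pinv A ** A = (A::real^'n^'n)"
  using pinv_sym(1) by (auto simp: penrose_def)

lemma ZRZ_in_V:
  "Zmat A S ** (A ** Q ** A) ** Zmat A S =
   A ** (S ** pinv (transpose S ** A ** A ** S) ** transpose S ** A ** A ** Q ** A ** A ** S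
        ** pinv (transpose S ** A ** A ** S) ** transpose S) ** A"
  by (simp add: Zmat_def matrix_mul_assoc)

lemma step_err:
  fixes A :: "real^'n^'n" assumes symA: "transpose A = A"
  shows "step A S X - pinv A = (X - pinv A) - Zmat A S ** (X - pinv A) ** Zmat A S"
proof -
  have 1: "A - A ** X ** A = A ** (pinv A - X) ** A"
    by (simp add: mm_ldiff mm_rdiff AApA[OF symA])
  have 2: "step A S X = X + Zmat A S ** (pinv A - X) ** Zmat A S"
    by (simp add: step_def 1 Zmat_def matrix_mul_assoc)
  show ?thesis unfolding 2 by (simp add: mm_ldiff mm_rdiff algebra_simps)
qed

lemma iter_local:
  "(\<And>j. j < k \<Longrightarrow> Ss j = Ss' j) \<Longrightarrow> iter A X0 Ss k = iter A X0 Ss' k"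
  by (induction k) auto

lemma decomp:
  fixes A Z :: "real^'n^'n"
  assumes symA: "transpose A = A" and R: "R = A ** Q ** A"
  shows "Z ** R ** Z = (\<Sum>b\<in>Basis. (R \<bullet> (transpose (pinv A) ** b ** transpose (pinv A))) *\<^sub>R
                                       (Z ** (A ** b ** A) ** Z))"
proof -
  define Y where "Y = pinv A ** R ** pinv A"
  have RY: "R = A ** Y ** A"
    unfolding Y_def R by (metis AApA[OF symA] matrix_mul_assoc)
  define L where "L = (\<lambda>Y::real^'n^'n. Z ** (A ** Y ** A) ** Z)"
  have lin: "linear L"
    unfolding L_def
    using linear_compose[OF linear_compose[OF linear_rmul[of A] linear_lmul[of A]]
             linear_compose[OF linear_rmul[of Z] linear_lmul[of Z]]]
    by (simp add: o_def matrix_mul_assoc)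
  have coef: "Y \<bullet> b = R \<bullet> (transpose (pinv A) ** b ** transpose (pinv A))" for b
  proof -
    have "Y \<bullet> b = (pinv A ** R) \<bullet> (b ** transpose (pinv A))" unfolding Y_def by (rule inner_mm_right)
    also have "\<dots> = R \<bullet> (transpose (pinv A) ** (b ** transpose (pinv A)))" by (rule inner_mm_left)
    finally show ?thesis by (simp add: matrix_mul_assoc)
  qed
  have "Z ** R ** Z = L (\<Sum>b\<in>Basis. (Y \<bullet> b) *\<^sub>R b)"
    by (simp add: L_def RY euclidean_representation)
  also have "\<dots> = (\<Sum>b\<in>Basis. (Y \<bullet> b) *\<^sub>R L b)"
    by (simp add: linear_sum[OF lin] linear_scale[OF lin])
  finally show ?thesis by (simp add: coef L_def)
qed

theorem theorem4:
  fixes A W :: "real^'n^'n" and D :: "(real^'t^'n) measure" and k :: nat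
  assumes symA: "transpose A = A"
    and D: "prob_space D" "sets D = sets borel"
  defines "\<rho> \<equiv> 1 - Inf {(integral\<^sup>L D (\<lambda>S. Zmat A S ** R ** Zmat A S)) \<bullet> R | R Q.
                          R = A ** Q ** A \<and> (norm R)\<^sup>2 = 1}"
  shows "integral\<^sup>L (PiM {..<k} (\<lambda>_. D)) (\<lambda>Ss. (norm (iter A (A ** W ** A) Ss k - pinv A))\<^sup>2)
           \<le> \<rho> ^ k * (norm (A ** W ** A - pinv A))\<^sup>2"
proof -
  interpret D: prob_space D by (rule D(1))
  let ?Z = "Zmat A :: real^'t^'n \<Rightarrow> real^'n^'n"
  let ?V = "range (\<lambda>Q. A ** Q ** A)"
  let ?T = "{(integral\<^sup>L D (\<lambda>S. Zmat A S ** R ** Zmat A S)) \<bullet> R | R Q.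
                          R = A ** Q ** A \<and> (norm R)\<^sup>2 = 1}"
  define R :: "(nat \<Rightarrow> real^'t^'n) \<Rightarrow> nat \<Rightarrow> real^'n^'n" where "R Ss k = iter A (A ** W ** A) Ss k - pinv A" for Ss k
  define c where "c = (norm (A ** W ** A - pinv A))\<^sup>2"
  define E where "E k = integral\<^sup>L (PiM {..<k} (\<lambda>_. D)) (\<lambda>Ss. (norm (R Ss k))\<^sup>2)" for k
  have goal: "?thesis \<longleftrightarrow> E k \<le> \<rho> ^ k * c" by (simp add: E_def R_def c_def)
  have c0: "0 \<le> c" by (simp add: c_def)
  have Zp: "transpose (?Z S) = ?Z S" "?Z S ** ?Z S = ?Z S" for S using Z_props[OF symA] by auto
  have VZ: "?Z S ** X ** ?Z S \<in> ?V" if "X \<in> ?V" for X S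
    using that by (auto simp: ZRZ_in_V)
  have Vdiff: "X - Y \<in> ?V" if XY: "X \<in> ?V" "Y \<in> ?V" for X Y
  proof -
    obtain Q1 Q2 where "X = A ** Q1 ** A" "Y = A ** Q2 ** A" using XY by blast
    then have "X - Y = A ** (Q1 - Q2) ** A" by (simp add: mm_ldiff mm_rdiff)
    then show ?thesis by blast
  qed
  have Vscale: "a *\<^sub>R X \<in> ?V" if XV: "X \<in> ?V" for X a
  proof -
    obtain Q where "X = A ** Q ** A" using XV by blast
    then have "a *\<^sub>R X = A ** (a *\<^sub>R Q) ** A" by (simp add: matrix_scalar_ac scalar_matrix_assoc[symmetric])
    then show ?thesis by blast
  qed
  have ZscaleZ: "?Z S ** (a *\<^sub>R X) ** ?Z S = a *\<^sub>R (?Z S ** X ** ?Z S)" for S a X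
    by (simp add: matrix_scalar_ac scalar_matrix_assoc[symmetric])
  have pV: "pinv A \<in> ?V" using pinv_in_V[OF symA] by (metis rangeI)
  have Rsuc: "R Ss (Suc k) = R Ss k - ?Z (Ss k) ** R Ss k ** ?Z (Ss k)" for Ss k
    by (simp add: R_def step_err[OF symA])
  have RV: "R Ss k \<in> ?V" for Ss k
  proof (induction k)
    case 0 show ?case unfolding R_def using pV by (auto intro!: Vdiff)
  next
    case (Suc k) then show ?case unfolding Rsuc by (intro Vdiff VZ)
  qed
  have Rb: "(norm (R Ss k))\<^sup>2 \<le> c" for Ss k
  proof (induction k)
    case 0 show ?case by (simp add: R_def c_def)
  next
    case (Suc k) then show ?case unfolding Rsuc using ZRZ_norm[OF Zp(1)[of "Ss k"] Zp(2)[of "Ss k"], of "R Ss k"] by linarith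
  qed
  have Rloc: "R (x(k:=y)) k = R x k" for x y k
    unfolding R_def by (subst iter_local[of k "x(k:=y)" x]) auto
  have PiP: "prob_space (PiM I (\<lambda>_. D))" for I :: "nat set" by (rule prob_space_PiM) (rule D(1))
  have Ebound: "E k \<le> c" for k
  proof (cases "integrable (PiM {..<k} (\<lambda>_. D)) (\<lambda>Ss. (norm (R Ss k))\<^sup>2)")
    case True then show ?thesis
      unfolding E_def using prob_space.integral_le_const[OF PiP True] Rb by auto
  next
    case False then show ?thesis using c0 by (simp add: E_def not_integrable_integral_eq)
  qed
  have valnn: "0 \<le> (integral\<^sup>L D (\<lambda>S. ?Z S ** X ** ?Z S)) \<bullet> X" for X
  proof (cases "integrable D (\<lambda>S. ?Z S ** X ** ?Z S)")
    case True
    then have "(integral\<^sup>L D (\<lambda>S. ?Z S ** X ** ?Z S)) \<bullet> X = integral\<^sup>L D (\<lambda>S. (?Z S ** X ** ?Z S) \<bullet> X)"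
      by simp
    also have "\<dots> \<ge> 0" by (rule Bochner_Integration.integral_nonneg) (simp add: ZRZ_norm(2)[OF Zp(1) Zp(2)])
    finally show ?thesis .
  next
    case False then show ?thesis by (simp add: not_integrable_integral_eq)
  qed
  have bdd: "bdd_below ?T" using valnn by (auto intro!: bdd_belowI[where m=0])
  have unitV: "X /\<^sub>R norm X \<in> ?V" "(norm (X /\<^sub>R norm X))\<^sup>2 = 1" if "X \<in> ?V" "X \<noteq> 0" for X
    using that Vscale by auto
  have unitT: "(integral\<^sup>L D (\<lambda>S. ?Z S ** (X /\<^sub>R norm X) ** ?Z S)) \<bullet> (X /\<^sub>R norm X) \<in> ?T"
    if XV: "X \<in> ?V" "X \<noteq> 0" for X
  proof -
    obtain Q where "X /\<^sub>R norm X = A ** Q ** A" using unitV(1)[OF XV] by blast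
    then show ?thesis using unitV(2)[OF XV] by blast
  qed
  show ?thesis
  proof (cases "\<forall>X\<in>?V. integrable D (\<lambda>S. ?Z S ** X ** ?Z S)")
    case False
    then obtain X where X: "X \<in> ?V" "\<not> integrable D (\<lambda>S. ?Z S ** X ** ?Z S)" by blast
    then have X0: "X \<noteq> 0" by auto
    let ?u = "X /\<^sub>R norm X"
    have "\<not> integrable D (\<lambda>S. ?Z S ** ?u ** ?Z S)"
    proof
      assume "integrable D (\<lambda>S. ?Z S ** ?u ** ?Z S)"
      then have "integrable D (\<lambda>S. norm X *\<^sub>R (?Z S ** ?u ** ?Z S))" by simp
      moreover have "(\<lambda>S. norm X *\<^sub>R (?Z S ** ?u ** ?Z S)) = (\<lambda>S. ?Z S ** X ** ?Z S)"
        using X0 by (simp add: ZscaleZ)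
      ultimately show False using X(2) by simp
    qed
    then have "0 \<in> ?T" using unitT[OF X(1) X0] by (simp add: not_integrable_integral_eq)
    then have "Inf ?T \<le> 0" by (rule cInf_lower[OF _ bdd])
    then have r1: "1 \<le> \<rho>" by (simp add: \<rho>_def)
    have "E k \<le> c" by (rule Ebound)
    also have "c \<le> \<rho> ^ k * c" using mult_right_mono[OF one_le_power[OF r1, of k] c0] by simp
    finally show ?thesis using goal by simp
  next
    case True
    have integ: "integrable D (\<lambda>S. ?Z S ** X ** ?Z S)" if "X \<in> ?V" for X using True that by blast
    have onestep: "integral\<^sup>L D (\<lambda>S. (norm (X - ?Z S ** X ** ?Z S))\<^sup>2)
        = (norm X)\<^sup>2 - (integral\<^sup>L D (\<lambda>S. ?Z S ** X ** ?Z S)) \<bullet> X" if XV: "X \<in> ?V" for X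
    proof -
      have "integral\<^sup>L D (\<lambda>S. (norm (X - ?Z S ** X ** ?Z S))\<^sup>2)
          = integral\<^sup>L D (\<lambda>S. (norm X)\<^sup>2 - (?Z S ** X ** ?Z S) \<bullet> X)"
        by (simp add: ZRZ_norm(1)[OF Zp(1) Zp(2)])
      also have "\<dots> = (norm X)\<^sup>2 - integral\<^sup>L D (\<lambda>S. (?Z S ** X ** ?Z S) \<bullet> X)"
        using integ[OF XV] by (subst Bochner_Integration.integral_diff) (auto simp: D.prob_space)
      also have "\<dots> = (norm X)\<^sup>2 - (integral\<^sup>L D (\<lambda>S. ?Z S ** X ** ?Z S)) \<bullet> X"
        using integ[OF XV] by simp
      finally show ?thesis .
    qed
    have valscale: "(integral\<^sup>L D (\<lambda>S. ?Z S ** (X /\<^sub>R norm X) ** ?Z S)) \<bullet> (X /\<^sub>R norm X)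
        = (integral\<^sup>L D (\<lambda>S. ?Z S ** X ** ?Z S)) \<bullet> X / (norm X)\<^sup>2" for X
      by (simp add: ZscaleZ power2_eq_square divide_inverse mult_ac)
    have key: "integral\<^sup>L D (\<lambda>S. (norm (X - ?Z S ** X ** ?Z S))\<^sup>2) \<le> \<rho> * (norm X)\<^sup>2"
      if XV: "X \<in> ?V" for X
    proof (cases "X = 0")
      case True then show ?thesis by simp
    next
      case False
      have "Inf ?T \<le> (integral\<^sup>L D (\<lambda>S. ?Z S ** X ** ?Z S)) \<bullet> X / (norm X)\<^sup>2"
        using cInf_lower[OF unitT[OF XV False] bdd] valscale by simp
      then have "Inf ?T * (norm X)\<^sup>2 \<le> (integral\<^sup>L D (\<lambda>S. ?Z S ** X ** ?Z S)) \<bullet> X"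
        using False by (simp add: pos_le_divide_eq)
      then show ?thesis unfolding onestep[OF XV] \<rho>_def by (simp add: algebra_simps)
    qed
    show ?thesis
    proof (cases "c = 0")
      case True then show ?thesis using Ebound[of k] goal by simp
    next
      case False
      have X0V: "A ** W ** A - pinv A \<in> ?V" using RV[of _ 0] by (simp add: R_def)
      have X0nz: "A ** W ** A - pinv A \<noteq> 0" using False by (simp add: c_def)
      let ?u = "(A ** W ** A - pinv A) /\<^sub>R norm (A ** W ** A - pinv A)"
      have rho0: "0 \<le> \<rho>"
      proof -
        have "0 \<le> integral\<^sup>L D (\<lambda>S. (norm (?u - ?Z S ** ?u ** ?Z S))\<^sup>2)"
          by (rule Bochner_Integration.integral_nonneg) simp
        then have "(integral\<^sup>L D (\<lambda>S. ?Z S ** ?u ** ?Z S)) \<bullet> ?u \<le> 1"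
          unfolding onestep[OF unitV(1)[OF X0V X0nz]] unitV(2)[OF X0V X0nz] by simp
        moreover have "Inf ?T \<le> (integral\<^sup>L D (\<lambda>S. ?Z S ** ?u ** ?Z S)) \<bullet> ?u"
          by (rule cInf_lower[OF unitT[OF X0V X0nz] bdd])
        ultimately show ?thesis by (simp add: \<rho>_def)
      qed
      have Zmeas: "(\<lambda>S. ?Z S ** X ** ?Z S) \<in> borel_measurable D" if "X \<in> ?V" for X
        using integ[OF that] by (rule borel_measurable_integrable)
      have Rmeas: "(\<lambda>Ss. R Ss j) \<in> borel_measurable (PiM {..<m} (\<lambda>_. D))" if "j \<le> m" for j m
        using that
      proof (induction j)
        case 0 show ?case by (simp add: R_def)
      next
        case (Suc j)
        then have jm: "j \<in> {..<m}" by simp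
        let ?C = "\<lambda>b. transpose (pinv A) ** b ** transpose (pinv A)"
        have eq: "(\<lambda>Ss. R Ss (Suc j)) = (\<lambda>Ss. R Ss j - (\<Sum>b\<in>Basis. (R Ss j \<bullet> ?C b) *\<^sub>R
                      ((\<lambda>S. ?Z S ** (A ** b ** A) ** ?Z S) (Ss j))))"
        proof
          fix Ss
          obtain Q where "R Ss j = A ** Q ** A" using RV[of Ss j] by blast
          then show "R Ss (Suc j) = R Ss j - (\<Sum>b\<in>Basis. (R Ss j \<bullet> ?C b) *\<^sub>R
                      ((\<lambda>S. ?Z S ** (A ** b ** A) ** ?Z S) (Ss j)))"
            unfolding Rsuc using decomp[OF symA, of "R Ss j" Q "?Z (Ss j)"] by simp
        qed
        have IH: "(\<lambda>Ss. R Ss j) \<in> borel_measurable (PiM {..<m} (\<lambda>_. D))" using Suc by simp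
        show ?case unfolding eq
          by (intro borel_measurable_diff IH borel_measurable_sum borel_measurable_scaleR
              borel_measurable_inner borel_measurable_const
              measurable_compose[OF measurable_component_singleton[OF jm] Zmeas] rangeI)
      qed
      have Emeas: "(\<lambda>Ss. (norm (R Ss j))\<^sup>2) \<in> borel_measurable (PiM {..<m} (\<lambda>_. D))" if "j \<le> m" for j m
        by (rule borel_measurable_power[OF measurable_compose[OF Rmeas[OF that] borel_measurable_norm]])
      have Eint: "integrable (PiM {..<m} (\<lambda>_. D)) (\<lambda>Ss. (norm (R Ss j))\<^sup>2)" if "j \<le> m" for j m
      proof -
        interpret Pm: prob_space "PiM {..<m} (\<lambda>_::nat. D)" by (rule PiP)
        show ?thesis
          by (rule Pm.integrable_const_bound[where B=c]) (auto simp: Rb Emeas[OF that])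
      qed
      interpret PS: product_sigma_finite "\<lambda>_::nat. D"
        by (simp add: product_sigma_finite_def D.sigma_finite_measure_axioms)
      have recur: "E (Suc k) \<le> \<rho> * E k" for k
      proof -
        have ins: "{..<Suc k} = insert k {..<k}" by auto
        have intS: "integrable (PiM (insert k {..<k}) (\<lambda>_. D)) (\<lambda>Ss. (norm (R Ss (Suc k)))\<^sup>2)"
          using Eint[of "Suc k" "Suc k"] ins by simp
        have "E (Suc k) = (\<integral>x. (\<integral>y. (norm (R (x(k:=y)) (Suc k)))\<^sup>2 \<partial>D) \<partial>PiM {..<k} (\<lambda>_. D))"
          unfolding E_def ins by (rule PS.product_integral_insert[OF _ _ intS]) auto
        also have "\<dots> \<le> (\<integral>x. \<rho> * (norm (R x k))\<^sup>2 \<partial>PiM {..<k} (\<lambda>_. D))"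
        proof (rule integral_mono')
          show "integrable (PiM {..<k} (\<lambda>_. D)) (\<lambda>x. \<rho> * (norm (R x k))\<^sup>2)"
            using Eint[of k k] by simp
        next
          fix x
          have "(\<integral>y. (norm (R (x(k:=y)) (Suc k)))\<^sup>2 \<partial>D)
              = (\<integral>y. (norm (R x k - ?Z y ** R x k ** ?Z y))\<^sup>2 \<partial>D)"
            by (simp add: Rsuc Rloc)
          also have "\<dots> \<le> \<rho> * (norm (R x k))\<^sup>2" by (rule key[OF RV])
          finally show "(\<integral>y. (norm (R (x(k:=y)) (Suc k)))\<^sup>2 \<partial>D) \<le> \<rho> * (norm (R x k))\<^sup>2" .
        next
          fix x show "0 \<le> \<rho> * (norm (R x k))\<^sup>2" using rho0 by simp
        qed
        also have "\<dots> = \<rho> * E k" by (simp add: E_def)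
        finally show ?thesis .
      qed
      have "E k \<le> \<rho> ^ k * c"
      proof (induction k)
        case 0 show ?case using Ebound[of 0] by simp
      next
        case (Suc k)
        have "E (Suc k) \<le> \<rho> * E k" by (rule recur)
        also have "\<dots> \<le> \<rho> * (\<rho> ^ k * c)" using Suc rho0 by (rule mult_left_mono)
        finally show ?case by simp
      qed
      then show ?thesis using goal by simp
    qed
  qed
qed

end
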